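(* Let $X$ be a set and $\tau$ a topology on $I(X)$ such that $(I(X),\tau)$ is a $T_1$ topological semigroup. Then: (i) each $v(x,y)$ ($x,y\in X$) is $\tau$-clopen, and each $w_1(y)$ and $w_2(y)$ ($y\in X$) is $\tau$-closed; (ii) if moreover $\tau$ is an inverse semigroup topology (inversion is continuous), then the inclusion relation $\{(f,g): f\subseteq g\}$ (as sets of ordered pairs) is closed in $I(X)\times I(X)$ if and only if every $w_1(x)$ is $\tau$-open; (iii) if $\tau$ is a Hausdorff topology making $I(X)$ a topological inverse semigroup, then $\tau_{pp}\subseteq\tau$.
   Context: $I(X)$ is the symmetric inverse semigroup on $X$: the set of all bijections $f:A\to B$ with $A,B\subseteq X$ (including the empty map); write $\mathrm{dom}(f)=A$, $\mathrm{im}(f)=B$. The product is composition: $\mathrm{dom}(f\circ g)=g^{-1}(\mathrm{dom}(f)\cap\mathrm{im}(g))$, $(f\circ g)(x)=f(g(x))$; inverse is $f^{-1}$. For $x,y\in X$: $v(x,y)=\{f: x\in\mathrm{dom}(f), f(x)=y\}$, $w_1(x)=\{f: x\notin\mathrm{dom}(f)\}$, $w_2(y)=\{f: y\notin\mathrm{im}(f)\}$. $\tau_{pp}$ is the topology on $I(X)$ generated by the subbasis of all sets $v(x,y)$, $w_1(x)$, $w_2(y)$. A topological semigroup has continuous multiplication; a topological inverse semigroup additionally has continuous inversion. *)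

theory Defs
  imports "HOL-Analysis.Analysis"
begin

text \<open>The symmetric inverse semigroup I(X) on X = UNIV :: 'a set: partial injections,
  represented as partial maps 'a \<rightharpoonup> 'a which are injective on their domain.
  A partial map is identified with its graph, so dom f and ran f are domain and image.\<close>

definition IX :: "('a \<rightharpoonup> 'a) set" where
  "IX = {f. inj_on f (dom f)}"

definition pmul :: "('a \<rightharpoonup> 'a) \<Rightarrow> ('a \<rightharpoonup> 'a) \<Rightarrow> ('a \<rightharpoonup> 'a)" where
  "pmul f g = f \<circ>\<^sub>m g"

definition pinv :: "('a \<rightharpoonup> 'a) \<Rightarrow> ('a \<rightharpoonup> 'a)" where
  "pinv f = (\<lambda>y. if y \<in> ran f then Some (THE x. f x = Some y) else None)"

definition v_set :: "'a \<Rightarrow> 'a \<Rightarrow> ('a \<rightharpoonup> 'a) set" where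
  "v_set x y = {f \<in> IX. f x = Some y}"

definition w1_set :: "'a \<Rightarrow> ('a \<rightharpoonup> 'a) set" where
  "w1_set x = {f \<in> IX. x \<notin> dom f}"

definition w2_set :: "'a \<Rightarrow> ('a \<rightharpoonup> 'a) set" where
  "w2_set y = {f \<in> IX. y \<notin> ran f}"

definition tau_pp :: "('a \<rightharpoonup> 'a) topology" where
  "tau_pp = topology_generated_by
     ((\<Union>x y. {v_set x y}) \<union> (\<Union>x. {w1_set x}) \<union> (\<Union>y. {w2_set y}))"

definition topological_semigroup_IX :: "('a \<rightharpoonup> 'a) topology \<Rightarrow> bool" where
  "topological_semigroup_IX \<tau> \<longleftrightarrow> topspace \<tau> = IX \<and>
     continuous_map (prod_topology \<tau> \<tau>) \<tau> (\<lambda>(f, g). pmul f g)"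

definition topological_inverse_semigroup_IX :: "('a \<rightharpoonup> 'a) topology \<Rightarrow> bool" where
  "topological_inverse_semigroup_IX \<tau> \<longleftrightarrow> topological_semigroup_IX \<tau> \<and>
     continuous_map \<tau> \<tau> pinv"

definition incl_rel :: "(('a \<rightharpoonup> 'a) \<times> ('a \<rightharpoonup> 'a)) set" where
  "incl_rel = {(f, g). f \<in> IX \<and> g \<in> IX \<and> f \<subseteq>\<^sub>m g}"

end

theory Submission
  imports Defs
begin

definition ee :: "'a \<Rightarrow> 'a \<rightharpoonup> 'a" where
  "ee x = (\<lambda>z. if z = x then Some x else None)"

definition pt :: "'a \<Rightarrow> 'a \<Rightarrow> 'a \<rightharpoonup> 'a" where
  "pt x y = (\<lambda>z. if z = x then Some y else None)"

lemma ee_IX: "ee x \<in> IX"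
  unfolding IX_def ee_def by (auto simp: inj_on_def split: if_splits)

lemma pt_IX: "pt x y \<in> IX"
  unfolding IX_def pt_def by (auto simp: inj_on_def split: if_splits)

lemma empty_IX: "Map.empty \<in> IX"
  unfolding IX_def by auto

lemma mul_cont:
  assumes "topological_semigroup_IX \<tau>" "continuous_map \<tau> \<tau> F" "continuous_map \<tau> \<tau> G"
  shows "continuous_map \<tau> \<tau> (\<lambda>f. pmul (F f) (G f))"
proof -
  have "continuous_map \<tau> (prod_topology \<tau> \<tau>) (\<lambda>f. (F f, G f))"
    using assms by (simp add: continuous_map_paired)
  moreover have "continuous_map (prod_topology \<tau> \<tau>) \<tau> (\<lambda>(f, g). pmul f g)"
    using assms unfolding topological_semigroup_IX_def by blast
  ultimately have "continuous_map \<tau> \<tau> ((\<lambda>(f, g). pmul f g) \<circ> (\<lambda>f. (F f, G f)))"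
    by (rule continuous_map_compose)
  then show ?thesis by (simp add: o_def)
qed

lemma const_cont:
  assumes "topological_semigroup_IX \<tau>" "a \<in> IX"
  shows "continuous_map \<tau> \<tau> (\<lambda>f. a)"
  using assms unfolding topological_semigroup_IX_def by simp

lemma pmul_ee_right: "pmul f (ee x) = (\<lambda>z. if z = x then f x else None)"
  unfolding pmul_def ee_def by (auto simp: map_comp_def)

lemma pmul_ee_left: "pmul (ee y) f = (\<lambda>z. if f z = Some y then Some y else None)"
  unfolding pmul_def ee_def by (rule ext) (auto simp: map_comp_def split: option.splits)

lemma h_eq: "pmul (ee y) (pmul f (ee x)) = (if f x = Some y then pt x y else Map.empty)"
  unfolding pmul_ee_right pmul_ee_left pt_def by (rule ext) auto

lemma w1_char: "pmul f (ee x) = Map.empty \<longleftrightarrow> x \<notin> dom f"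
  unfolding pmul_ee_right by (auto simp: fun_eq_iff)

lemma w2_char: "pmul (ee y) f = Map.empty \<longleftrightarrow> y \<notin> ran f"
  unfolding pmul_ee_left by (auto simp: fun_eq_iff ran_def)

lemma pt_ne_empty: "pt x y \<noteq> Map.empty"
  unfolding pt_def by (auto simp: fun_eq_iff)

lemma if_pt1: "((if P then pt x y else Map.empty) \<in> {pt x y}) = P"
  using pt_ne_empty[of x y] by auto

lemma if_pt2: "((if P then pt x y else Map.empty) \<in> {Map.empty}) = (\<not> P)"
  using pt_ne_empty[of x y] by auto

lemma pinv_mul: assumes "f \<in> IX"
  shows "pmul (pinv f) f = (\<lambda>z. if z \<in> dom f then Some z else None)"
proof (rule ext)
  fix z
  have inj: "inj_on f (dom f)" using assms unfolding IX_def by simp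
  show "pmul (pinv f) f z = (if z \<in> dom f then Some z else None)"
  proof (cases "f z")
    case None then show ?thesis by (simp add: pmul_def domIff)
  next
    case (Some y)
    have "(THE x. f x = Some y) = z"
    proof (rule the_equality)
      show "f z = Some y" by (rule Some)
      fix x assume x: "f x = Some y"
      show "x = z"
        by (rule inj_onD[OF inj]) (use Some x in auto)
    qed
    moreover have "y \<in> ran f" using Some by (rule ranI)
    ultimately show ?thesis using Some by (simp add: pmul_def pinv_def domIff)
  qed
qed

lemma dom_pinv: "dom (pinv f) = ran f"
  unfolding pinv_def dom_def by simp

lemma incl_char:
  assumes "f \<in> IX"
  shows "f \<subseteq>\<^sub>m g \<longleftrightarrow> f = pmul g (pmul (pinv f) f)"
  unfolding pinv_mul[OF assms] map_le_def
  by (auto simp: pmul_def map_comp_def fun_eq_iff dom_def split: if_splits option.splits)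

lemma ee_le: "ee x \<subseteq>\<^sub>m g \<longleftrightarrow> g x = Some x"
  unfolding ee_def map_le_def by (auto simp: dom_def)


lemma part1:
  assumes S: "topological_semigroup_IX \<tau>" and T: "t1_space \<tau>"
  shows "openin \<tau> (v_set x y) \<and> closedin \<tau> (v_set x y)"
    "closedin \<tau> (w1_set y)" "closedin \<tau> (w2_set y)"
proof -
  have top: "topspace \<tau> = IX" using S unfolding topological_semigroup_IX_def by blast
  have id: "continuous_map \<tau> \<tau> (\<lambda>f. f)" by simp
  have cl: "closedin \<tau> {a}" if "a \<in> IX" for a
    by (rule bspec[OF T[unfolded t1_space_closedin_singleton]]) (simp add: top that)
  have cl0: "closedin \<tau> {Map.empty}"
    by (rule cl[OF empty_IX])
  have clpt: "closedin \<tau> {pt x y}"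
    by (rule cl[OF pt_IX])
  have r0: "continuous_map \<tau> \<tau> (\<lambda>f. pmul f (ee x))"
    using mul_cont[OF S id const_cont[OF S ee_IX]] .
  have h: "continuous_map \<tau> \<tau> (\<lambda>f. pmul (ee y) (pmul f (ee x)))"
    using mul_cont[OF S const_cont[OF S ee_IX] r0] .
  have r: "continuous_map \<tau> \<tau> (\<lambda>f. pmul f (ee y))"
    using mul_cont[OF S id const_cont[OF S ee_IX]] .
  have l: "continuous_map \<tau> \<tau> (\<lambda>f. pmul (ee y) f)"
    using mul_cont[OF S const_cont[OF S ee_IX] id] .
  have "v_set x y = {f \<in> topspace \<tau>. pmul (ee y) (pmul f (ee x)) \<in> {pt x y}}"
    unfolding v_set_def top h_eq if_pt1 if_pt2 by simp
  then have c1: "closedin \<tau> (v_set x y)"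
    using closedin_continuous_map_preimage[OF h clpt] by simp
  have "v_set x y = topspace \<tau> - {f \<in> topspace \<tau>. pmul (ee y) (pmul f (ee x)) \<in> {Map.empty}}"
    unfolding v_set_def top h_eq if_pt1 if_pt2 by blast
  then have o1: "openin \<tau> (v_set x y)"
    using closedin_continuous_map_preimage[OF h cl0] by (simp add: openin_diff)
  show "openin \<tau> (v_set x y) \<and> closedin \<tau> (v_set x y)" using c1 o1 by blast
  have "w1_set y = {f \<in> topspace \<tau>. pmul f (ee y) \<in> {Map.empty}}"
    unfolding w1_set_def top by (simp add: w1_char)
  then show "closedin \<tau> (w1_set y)"
    using closedin_continuous_map_preimage[OF r cl0] by simp
  have "w2_set y = {f \<in> topspace \<tau>. pmul (ee y) f \<in> {Map.empty}}"
    unfolding w2_set_def top by (simp add: w2_char)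
  then show "closedin \<tau> (w2_set y)"
    using closedin_continuous_map_preimage[OF l cl0] by simp
qed

lemma part2:
  assumes S: "topological_semigroup_IX \<tau>" and T: "t1_space \<tau>"
    and I: "continuous_map \<tau> \<tau> pinv"
  shows "closedin (prod_topology \<tau> \<tau>) incl_rel \<longleftrightarrow> (\<forall>x. openin \<tau> (w1_set x))"
proof
  have top: "topspace \<tau> = IX" using S unfolding topological_semigroup_IX_def by blast
  assume C: "closedin (prod_topology \<tau> \<tau>) incl_rel"
  show "\<forall>x. openin \<tau> (w1_set x)"
  proof
    fix x
    have id: "continuous_map \<tau> \<tau> (\<lambda>f. f)" by simp
    have psi: "continuous_map \<tau> (prod_topology \<tau> \<tau>) (\<lambda>f. (ee x, pmul (pinv f) f))"
      unfolding continuous_map_paired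
      using const_cont[OF S ee_IX] mul_cont[OF S I id] by blast
    have O: "openin (prod_topology \<tau> \<tau>) (topspace (prod_topology \<tau> \<tau>) - incl_rel)"
      using C by (simp add: closedin_def)
    have pIX: "pmul (pinv f) f \<in> IX" if "f \<in> IX" for f :: "'a \<rightharpoonup> 'a"
    proof -
      have "f \<in> topspace \<tau>" using that top by simp
      then have "(ee x, pmul (pinv f) f) \<in> (\<lambda>xa. (ee x, pmul (pinv xa) xa)) ` topspace \<tau>"
        by (rule imageI)
      then have "(ee x, pmul (pinv f) f) \<in> topspace (prod_topology \<tau> \<tau>)"
        by (rule subsetD[OF continuous_map_image_subset_topspace[OF psi]])
      then show ?thesis using top by (simp add: topspace_prod_topology)
    qed
    have "w1_set x = {f \<in> topspace \<tau>. (ee x, pmul (pinv f) f) \<in> topspace (prod_topology \<tau> \<tau>) - incl_rel}"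
    proof (rule set_eqI)
      fix f :: "'a \<rightharpoonup> 'a"
      show "f \<in> w1_set x \<longleftrightarrow> f \<in> {f \<in> topspace \<tau>. (ee x, pmul (pinv f) f) \<in> topspace (prod_topology \<tau> \<tau>) - incl_rel}"
      proof (cases "f \<in> IX")
        case True
        have a: "(ee x, pmul (pinv f) f) \<in> topspace (prod_topology \<tau> \<tau>)"
          using pIX[OF True] ee_IX top by (simp add: topspace_prod_topology)
        have b: "(ee x, pmul (pinv f) f) \<in> incl_rel \<longleftrightarrow> x \<in> dom f"
          using pIX[OF True] ee_IX[of x] unfolding incl_rel_def pinv_mul[OF True] by (simp add: ee_le)
        show ?thesis using True a b top unfolding w1_set_def by blast
      next
        case False
        then show ?thesis using top unfolding w1_set_def by blast
      qed
    qed
    then show "openin \<tau> (w1_set x)"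
      using openin_continuous_map_preimage[OF psi O] by simp
  qed
next
  have top: "topspace \<tau> = IX" using S unfolding topological_semigroup_IX_def by blast
  assume W: "\<forall>x. openin \<tau> (w1_set x)"
  have V: "openin \<tau> (v_set x y)" for x y using part1[OF S T] by blast
  show "closedin (prod_topology \<tau> \<tau>) incl_rel"
    unfolding closedin_def
  proof
    show "incl_rel \<subseteq> topspace (prod_topology \<tau> \<tau>)"
      unfolding incl_rel_def using top by auto
    show "openin (prod_topology \<tau> \<tau>) (topspace (prod_topology \<tau> \<tau>) - incl_rel)"
    proof (subst openin_subopen, intro ballI)
      fix p assume p: "p \<in> topspace (prod_topology \<tau> \<tau>) - incl_rel"
      obtain f g where fg: "p = (f, g)" by (cases p)
      have fI: "f \<in> IX" and gI: "g \<in> IX" and nl: "\<not> f \<subseteq>\<^sub>m g"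
        using p fg top by (auto simp: incl_rel_def)
      then obtain z where z: "z \<in> dom f" "f z \<noteq> g z" by (auto simp: map_le_def)
      then obtain y where y: "f z = Some y" by auto
      show "\<exists>T. openin (prod_topology \<tau> \<tau>) T \<and> p \<in> T \<and> T \<subseteq> topspace (prod_topology \<tau> \<tau>) - incl_rel"
      proof (cases "g z")
        case None
        show ?thesis
        proof (intro exI conjI)
          show "openin (prod_topology \<tau> \<tau>) (v_set z y \<times> w1_set z)"
            using V W by (simp add: openin_prod_Times_iff)
          show "p \<in> v_set z y \<times> w1_set z"
            using fg fI gI y None by (auto simp: v_set_def w1_set_def)
          show "v_set z y \<times> w1_set z \<subseteq> topspace (prod_topology \<tau> \<tau>) - incl_rel"
            using top by (auto simp: v_set_def w1_set_def incl_rel_def map_le_def dom_def)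
        qed
      next
        case (Some u)
        with z y have uy: "u \<noteq> y" by auto
        show ?thesis
        proof (intro exI conjI)
          show "openin (prod_topology \<tau> \<tau>) (v_set z y \<times> v_set z u)"
            using V by (simp add: openin_prod_Times_iff)
          show "p \<in> v_set z y \<times> v_set z u"
            using fg fI gI y Some by (auto simp: v_set_def)
          show "v_set z y \<times> v_set z u \<subseteq> topspace (prod_topology \<tau> \<tau>) - incl_rel"
            using top uy by (auto simp: v_set_def incl_rel_def map_le_def dom_def)
        qed
      qed
    qed
  qed
qed

lemma part3:
  assumes S: "topological_semigroup_IX \<tau>" and T: "t1_space \<tau>"
    and I: "continuous_map \<tau> \<tau> pinv" and H: "Hausdorff_space \<tau>"
    and U: "openin tau_pp U"
  shows "openin \<tau> U"
proof -
  have top: "topspace \<tau> = IX" using S unfolding topological_semigroup_IX_def by blast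
  have id: "continuous_map \<tau> \<tau> (\<lambda>f. f)" by simp
  let ?P = "prod_topology \<tau> \<tau>"
  have F: "continuous_map ?P \<tau> fst" and G: "continuous_map ?P \<tau> snd"
    by (simp_all add: continuous_map_fst continuous_map_snd)
  have IF: "continuous_map ?P \<tau> (\<lambda>p. pinv (fst p))"
    using continuous_map_compose[OF F I] by (simp add: o_def)
  have M: "continuous_map ?P \<tau> (\<lambda>p. pmul (snd p) (pmul (pinv (fst p)) (fst p)))"
  proof -
    have m: "continuous_map (prod_topology \<tau> \<tau>) \<tau> (\<lambda>(f, g). pmul f g)"
      using S unfolding topological_semigroup_IX_def by blast
    have mc: "continuous_map ?P \<tau> (\<lambda>p. pmul (A p) (B p))"
      if "continuous_map ?P \<tau> A" "continuous_map ?P \<tau> B" for A B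
    proof -
      have "continuous_map ?P ?P (\<lambda>p. (A p, B p))"
        using that by (simp add: continuous_map_paired)
      from continuous_map_compose[OF this m] show ?thesis by (simp add: o_def)
    qed
    show ?thesis by (intro mc G IF F)
  qed
  have "closedin ?P {p \<in> topspace ?P. fst p = pmul (snd p) (pmul (pinv (fst p)) (fst p))}"
    by (rule closedin_continuous_maps_eq[OF H F M])
  moreover have "{p \<in> topspace ?P. fst p = pmul (snd p) (pmul (pinv (fst p)) (fst p))} = incl_rel"
  proof (rule set_eqI)
    fix p :: "('a \<rightharpoonup> 'a) \<times> ('a \<rightharpoonup> 'a)"
    obtain f g where p: "p = (f, g)" by (cases p)
    show "p \<in> {p \<in> topspace ?P. fst p = pmul (snd p) (pmul (pinv (fst p)) (fst p))} \<longleftrightarrow> p \<in> incl_rel"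
      using incl_char[of f g] unfolding p incl_rel_def by (auto simp: top)
  qed
  ultimately have "closedin ?P incl_rel" by simp
  then have W1: "openin \<tau> (w1_set x)" for x using part2[OF S T I] by blast
  have W2: "openin \<tau> (w2_set y)" for y
  proof -
    have "w2_set y = {f \<in> topspace \<tau>. pinv f \<in> w1_set y}"
      using I top unfolding w2_set_def w1_set_def continuous_map_def
      by (auto simp: dom_pinv)
    then show ?thesis using openin_continuous_map_preimage[OF I W1] by simp
  qed
  have V: "openin \<tau> (v_set x y)" for x y using part1[OF S T] by blast
  have ist: "istopology (openin \<tau>)" by (simp add: istopology_def openin_Union openin_Int)
  have "generate_topology_on ((\<Union>x y. {v_set x y}) \<union> (\<Union>x. {w1_set x}) \<union> (\<Union>y. {w2_set y})) U"
    using U unfolding tau_pp_def by (simp add: openin_topology_generated_by_iff)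
  then show ?thesis
    by (rule generate_topology_on_coarsest[OF ist, rotated]) (use V W1 W2 in auto)
qed

theorem theorem3p3:
  fixes \<tau> :: "('a \<rightharpoonup> 'a) topology"
  assumes "topological_semigroup_IX \<tau>" and "t1_space \<tau>"
  shows "((\<forall>x y. openin \<tau> (v_set x y) \<and> closedin \<tau> (v_set x y)) \<and>
          (\<forall>y. closedin \<tau> (w1_set y) \<and> closedin \<tau> (w2_set y)))
       \<and> (topological_inverse_semigroup_IX \<tau> \<longrightarrow>
           (closedin (prod_topology \<tau> \<tau>) incl_rel \<longleftrightarrow> (\<forall>x. openin \<tau> (w1_set x))))
       \<and> (Hausdorff_space \<tau> \<and> topological_inverse_semigroup_IX \<tau> \<longrightarrow>
           (\<forall>U. openin tau_pp U \<longrightarrow> openin \<tau> U))"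
  using part1[OF assms] part2[OF assms] part3[OF assms]
  unfolding topological_inverse_semigroup_IX_def by blast

end
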